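(* Let $G$ be a simple graph on $n$ vertices and let $k$ be an integer with $3\le k\le n-3$. If $G$ contains a path with $7$ vertices (as a subgraph), then $F_k(G)$ is non-planar.
   Context: For a simple graph $G=(V,E)$ on $n$ vertices and an integer $1\le k<n$, the $k$-token graph $F_k(G)$ is the graph whose vertices are all $k$-element subsets of $V$, two such subsets $A,B$ being adjacent whenever their symmetric difference $A\triangle B$ is a pair $\{a,b\}$ with $a$ adjacent to $b$ in $G$. *)

theory Defs
  imports "HOL-Analysis.Analysis"
begin

definition simple_graph :: "'a set \<Rightarrow> ('a \<Rightarrow> 'a \<Rightarrow> bool) \<Rightarrow> bool" where
  "simple_graph V E \<longleftrightarrow> finite V \<and> (\<forall>a b. E a b \<longrightarrow> E b a)
     \<and> (\<forall>a. \<not> E a a) \<and> (\<forall>a b. E a b \<longrightarrow> a \<in> V \<and> b \<in> V)"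

definition graph_edges :: "'b set \<Rightarrow> ('b \<Rightarrow> 'b \<Rightarrow> bool) \<Rightarrow> 'b set set" where
  "graph_edges W R = {{u, v} | u v. u \<in> W \<and> v \<in> W \<and> R u v}"

definition token_vertices :: "'a set \<Rightarrow> nat \<Rightarrow> 'a set set" where
  "token_vertices V k = {A. A \<subseteq> V \<and> card A = k}"

definition token_adj :: "('a \<Rightarrow> 'a \<Rightarrow> bool) \<Rightarrow> 'a set \<Rightarrow> 'a set \<Rightarrow> bool" where
  "token_adj E A B \<longleftrightarrow> (\<exists>a b. (A - B) \<union> (B - A) = {a, b} \<and> E a b)"

definition has_path_subgraph :: "'a set \<Rightarrow> ('a \<Rightarrow> 'a \<Rightarrow> bool) \<Rightarrow> nat \<Rightarrow> bool" where
  "has_path_subgraph V E m \<longleftrightarrow> (\<exists>xs. length xs = m \<and> distinct xs \<and> set xs \<subseteq> V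
     \<and> (\<forall>i. Suc i < m \<longrightarrow> E (xs ! i) (xs ! Suc i)))"

text \<open>Planarity: an embedding in the plane (identified with the complex plane):
  vertices go injectively to points, each edge to an arc joining the images of
  its endpoints and meeting no other vertex image, and two distinct edges meet
  only in images of common endpoints.\<close>
definition planar :: "'b set \<Rightarrow> ('b \<Rightarrow> 'b \<Rightarrow> bool) \<Rightarrow> bool" where
  "planar W R \<longleftrightarrow> (\<exists>(f :: 'b \<Rightarrow> complex) (g :: 'b set \<Rightarrow> real \<Rightarrow> complex).
      inj_on f W \<and>
      (\<forall>u\<in>W. \<forall>v\<in>W. R u v \<longrightarrow>
          arc (g {u, v}) \<and> {pathstart (g {u, v}), pathfinish (g {u, v})} = {f u, f v}
          \<and> path_image (g {u, v}) \<inter> f ` W = {f u, f v}) \<and>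
      (\<forall>e\<in>graph_edges W R. \<forall>e'\<in>graph_edges W R. e \<noteq> e' \<longrightarrow>
          path_image (g e) \<inter> path_image (g e') \<subseteq> f ` (e \<inter> e')))"

end

theory Submission
  imports Defs
begin

lemma arc_interior_eq:
  fixes p :: "real \<Rightarrow> 'a::real_normed_vector"
  assumes "arc p"
  shows "path_image p - {pathstart p, pathfinish p} = p ` {0<..<1}"
proof -
  have inj: "inj_on p {0..1}" using assms by (simp add: arc_def)
  show ?thesis
  proof
    show "path_image p - {pathstart p, pathfinish p} \<subseteq> p ` {0<..<1}"
    proof
      fix x assume x: "x \<in> path_image p - {pathstart p, pathfinish p}"
      then obtain t where t: "t \<in> {0..1}" "x = p t" by (auto simp: path_image_def)
      with x have "t \<noteq> 0" "t \<noteq> 1" by (auto simp: pathstart_def pathfinish_def)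
      with t show "x \<in> p ` {0<..<1}" by auto
    qed
    show "p ` {0<..<1} \<subseteq> path_image p - {pathstart p, pathfinish p}"
    proof
      fix x assume "x \<in> p ` {0<..<1}"
      then obtain t where t: "t \<in> {0<..<1}" "x = p t" by auto
      have "p t \<noteq> p 0" using inj t by (metis atLeastAtMost_iff greaterThanLessThan_iff inj_on_eq_iff less_eq_real_def less_irrefl zero_le_one)
      moreover have "p t \<noteq> p 1" using inj t by (metis atLeastAtMost_iff greaterThanLessThan_iff inj_on_eq_iff less_eq_real_def less_irrefl zero_le_one)
      ultimately show "x \<in> path_image p - {pathstart p, pathfinish p}"
        using t by (auto simp: path_image_def pathstart_def pathfinish_def)
    qed
  qed
qed

lemma arc_interior_connected:
  fixes p :: "real \<Rightarrow> 'a::real_normed_vector"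
  assumes "arc p"
  shows "connected (path_image p - {pathstart p, pathfinish p})"
proof -
  have "continuous_on {0<..<1} p"
    using assms by (auto simp: arc_def path_def intro: continuous_on_subset)
  then show ?thesis
    unfolding arc_interior_eq[OF assms] by (rule connected_continuous_image) simp
qed

lemma arc_interior_nonempty:
  fixes p :: "real \<Rightarrow> 'a::real_normed_vector"
  assumes "arc p"
  shows "path_image p - {pathstart p, pathfinish p} \<noteq> {}"
  unfolding arc_interior_eq[OF assms] by auto

lemma arc_minus_finish_eq:
  fixes p :: "real \<Rightarrow> 'a::real_normed_vector"
  assumes "arc p"
  shows "path_image p - {pathfinish p} = p ` {0..<1}"
proof -
  have inj: "inj_on p {0..1}" using assms by (simp add: arc_def)
  show ?thesis
  proof
    show "path_image p - {pathfinish p} \<subseteq> p ` {0..<1}"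
    proof
      fix x assume x: "x \<in> path_image p - {pathfinish p}"
      then obtain t where t: "t \<in> {0..1}" "x = p t" by (auto simp: path_image_def)
      with x have "t \<noteq> 1" by (auto simp: pathfinish_def)
      with t show "x \<in> p ` {0..<1}" by auto
    qed
    show "p ` {0..<1} \<subseteq> path_image p - {pathfinish p}"
    proof
      fix x assume "x \<in> p ` {0..<1}"
      then obtain t where t: "t \<in> {0..<1}" "x = p t" by auto
      have "p t \<noteq> p 1" using inj t by (metis atLeastAtMost_iff atLeastLessThan_iff inj_on_eq_iff less_eq_real_def less_irrefl zero_le_one)
      then show "x \<in> path_image p - {pathfinish p}"
        using t by (auto simp: path_image_def pathfinish_def)
    qed
  qed
qed

lemma arc_minus_finish_connected:
  fixes p :: "real \<Rightarrow> 'a::real_normed_vector"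
  assumes "arc p"
  shows "connected (path_image p - {pathfinish p})"
proof -
  have "continuous_on {0..<1} p"
    using assms by (auto simp: arc_def path_def intro: continuous_on_subset)
  then show ?thesis
    unfolding arc_minus_finish_eq[OF assms] by (rule connected_continuous_image) simp
qed

lemma arc_finish_in_closure:
  fixes p :: "real \<Rightarrow> 'a::real_normed_vector"
  assumes "arc p"
  shows "pathfinish p \<in> closure (path_image p - {pathfinish p})"
proof -
  have c: "continuous_on (closure {0..<1::real}) p"
    using assms by (auto simp: arc_def path_def)
  have "p ` closure {0..<1::real} \<subseteq> closure (p ` {0..<1})"
    by (rule image_closure_subset[OF c]) (auto intro: closure_subset[THEN subsetD])
  then show ?thesis
    unfolding arc_minus_finish_eq[OF assms] by (auto simp: pathfinish_def)
qed

lemma arc_start_ne_finish: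
  fixes p :: "real \<Rightarrow> 'a::real_normed_vector"
  assumes "arc p" shows "pathstart p \<noteq> pathfinish p"
  using arc_distinct_ends[OF assms] by auto

lemma connected_in_inside_or_outside:
  fixes C :: "complex set"
  assumes K: "connected K" and KC: "K \<inter> C = {}" and cl: "closed C"
  shows "K \<subseteq> inside C \<or> K \<subseteq> outside C"
proof -
  have "inside C \<inter> outside C \<inter> K = {}" by auto
  moreover have "K \<subseteq> inside C \<union> outside C" using KC by auto
  ultimately have "inside C \<inter> K = {} \<or> outside C \<inter> K = {}"
    using connectedD[OF K open_inside[OF cl] open_outside[OF cl]] by blast
  then show ?thesis using \<open>K \<subseteq> inside C \<union> outside C\<close> by blast
qed

lemma two_arcs_cycle:
  fixes p q :: "real \<Rightarrow> complex"
  assumes "arc p" "arc q" "pathstart p = a" "pathfinish p = b" "pathstart q = a" "pathfinish q = b"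
    and "path_image p \<inter> path_image q = {a,b}"
  shows "inside (path_image p \<union> path_image q) \<noteq> {}" "connected (inside (path_image p \<union> path_image q))"
     "connected (outside (path_image p \<union> path_image q))"
     "frontier (inside (path_image p \<union> path_image q)) = path_image p \<union> path_image q"
     "bounded (inside (path_image p \<union> path_image q))"
     "closed (path_image p \<union> path_image q)" "bounded (path_image p \<union> path_image q)"
proof -
  let ?c = "p +++ reversepath q"
  have sp: "simple_path ?c"
    using assms by (subst simple_path_join_loop_eq) (auto simp: arc_reversepath)
  have img: "path_image ?c = path_image p \<union> path_image q"
    using assms by (simp add: path_image_join)
  have lp: "pathfinish ?c = pathstart ?c" using assms by simp
  show "closed (path_image p \<union> path_image q)" "bounded (path_image p \<union> path_image q)"
    using assms by (auto intro!: closed_path_image bounded_path_image arc_imp_path)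
  note J = Jordan_inside_outside[OF sp lp, unfolded img]
  show "inside (path_image p \<union> path_image q) \<noteq> {}" "connected (inside (path_image p \<union> path_image q))"
     "connected (outside (path_image p \<union> path_image q))"
     "frontier (inside (path_image p \<union> path_image q)) = path_image p \<union> path_image q"
     "bounded (inside (path_image p \<union> path_image q))"
    using J by auto
qed

definition theta :: "(real \<Rightarrow> complex) \<Rightarrow> (real \<Rightarrow> complex) \<Rightarrow> (real \<Rightarrow> complex) \<Rightarrow> complex \<Rightarrow> complex \<Rightarrow> bool" where
  "theta p1 p2 p3 a b \<longleftrightarrow> arc p1 \<and> arc p2 \<and> arc p3 \<and> pathstart p1 = a \<and> pathfinish p1 = b
     \<and> pathstart p2 = a \<and> pathfinish p2 = b \<and> pathstart p3 = a \<and> pathfinish p3 = b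
     \<and> path_image p1 \<inter> path_image p2 = {a,b} \<and> path_image p1 \<inter> path_image p3 = {a,b}
     \<and> path_image p2 \<inter> path_image p3 = {a,b}"

lemma theta_perm:
  assumes "theta p1 p2 p3 a b"
  shows "theta p2 p1 p3 a b" "theta p1 p3 p2 a b" "theta p2 p3 p1 a b" "theta p3 p1 p2 a b" "theta p3 p2 p1 a b"
  using assms unfolding theta_def by (auto simp: inf_commute)

lemma theta_cycle:
  assumes "theta p1 p2 p3 a b"
  shows "inside (path_image p1 \<union> path_image p2) \<noteq> {}" "connected (inside (path_image p1 \<union> path_image p2))"
     "connected (outside (path_image p1 \<union> path_image p2))"
     "frontier (inside (path_image p1 \<union> path_image p2)) = path_image p1 \<union> path_image p2"
     "bounded (inside (path_image p1 \<union> path_image p2))"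
     "closed (path_image p1 \<union> path_image p2)" "bounded (path_image p1 \<union> path_image p2)"
  using assms unfolding theta_def by (intro two_arcs_cycle[of p1 p2 a b]; auto)+

lemma theta_basic:
  assumes "theta p1 p2 p3 a b"
  shows "a \<noteq> b" "a \<in> path_image p1" "b \<in> path_image p1" "a \<in> path_image p2" "b \<in> path_image p2"
    "a \<in> path_image p3" "b \<in> path_image p3"
    "path_image p1 - {a,b} \<noteq> {}" "path_image p2 - {a,b} \<noteq> {}" "path_image p3 - {a,b} \<noteq> {}"
    "connected (path_image p1 - {a,b})" "connected (path_image p2 - {a,b})" "connected (path_image p3 - {a,b})"
    "path_image p1 \<inter> path_image p2 = {a,b}" "path_image p1 \<inter> path_image p3 = {a,b}"
     "path_image p2 \<inter> path_image p3 = {a,b}"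
proof -
  have h: "arc p1" "arc p2" "arc p3" "pathstart p1 = a" "pathfinish p1 = b"
     "pathstart p2 = a" "pathfinish p2 = b" "pathstart p3 = a" "pathfinish p3 = b"
    using assms unfolding theta_def by auto
  show "a \<noteq> b" using arc_start_ne_finish[OF h(1)] h by simp
  show "a \<in> path_image p1" "b \<in> path_image p1" "a \<in> path_image p2" "b \<in> path_image p2"
    "a \<in> path_image p3" "b \<in> path_image p3"
    using h pathstart_in_path_image pathfinish_in_path_image by metis+
  show "path_image p1 - {a,b} \<noteq> {}" "path_image p2 - {a,b} \<noteq> {}" "path_image p3 - {a,b} \<noteq> {}"
    using arc_interior_nonempty[OF h(1)] arc_interior_nonempty[OF h(2)] arc_interior_nonempty[OF h(3)] h
    by simp_all
  show "connected (path_image p1 - {a,b})" "connected (path_image p2 - {a,b})" "connected (path_image p3 - {a,b})"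
    using arc_interior_connected[OF h(1)] arc_interior_connected[OF h(2)] arc_interior_connected[OF h(3)] h
    by simp_all
  show "path_image p1 \<inter> path_image p2 = {a,b}" "path_image p1 \<inter> path_image p3 = {a,b}"
     "path_image p2 \<inter> path_image p3 = {a,b}" using assms unfolding theta_def by auto
qed

lemma theta_in_out:
  assumes th: "theta p1 p2 p3 a b"
    and o3: "path_image p3 - {a,b} \<subseteq> outside (path_image p1 \<union> path_image p2)"
    and o2: "path_image p2 - {a,b} \<subseteq> outside (path_image p1 \<union> path_image p3)"
  shows "inside (path_image p1 \<union> path_image p2) \<subseteq> outside (path_image p1 \<union> path_image p3)"
proof -
  note b = theta_basic[OF th]
  note c12 = theta_cycle[OF th]
  note c13 = theta_cycle[OF theta_perm(2)[OF th]]
  let ?U = "inside (path_image p1 \<union> path_image p2)"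
  have UC: "?U \<inter> (path_image p1 \<union> path_image p3) = {}"
  proof -
    have x: "?U \<inter> (path_image p1 \<union> path_image p2) = {}" by (rule inside_no_overlap)
    have y: "?U \<inter> outside (path_image p1 \<union> path_image p2) = {}" by (rule inside_Int_outside)
    show ?thesis using x y o3 b(2,3) by blast
  qed
  have "?U \<subseteq> inside (path_image p1 \<union> path_image p3) \<or> ?U \<subseteq> outside (path_image p1 \<union> path_image p3)"
    by (rule connected_in_inside_or_outside[OF c12(2) UC c13(6)])
  moreover have "\<not> ?U \<subseteq> inside (path_image p1 \<union> path_image p3)"
  proof
    assume U: "?U \<subseteq> inside (path_image p1 \<union> path_image p3)"
    have "path_image p2 - {a,b} \<subseteq> frontier ?U" using c12(4) by auto
    also have "frontier ?U \<subseteq> closure ?U" by (simp add: frontier_def)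
    also have "closure ?U \<subseteq> closure (inside (path_image p1 \<union> path_image p3))" using U by (rule closure_mono)
    also have "\<dots> \<subseteq> (path_image p1 \<union> path_image p3) \<union> inside (path_image p1 \<union> path_image p3)"
      by (rule closure_inside_subset[OF c13(6)])
    finally have z: "path_image p2 - {a,b} \<subseteq> (path_image p1 \<union> path_image p3) \<union> inside (path_image p1 \<union> path_image p3)" .
    have "path_image p2 - {a,b} \<subseteq> inside (path_image p1 \<union> path_image p3)"
      using z b(14,16) by blast
    moreover have "inside (path_image p1 \<union> path_image p3) \<inter> outside (path_image p1 \<union> path_image p3) = {}"
      by (rule inside_Int_outside)
    ultimately show False using o2 b(9) by blast
  qed
  ultimately show ?thesis by blast
qed

lemma theta_not_all_out:
  assumes th: "theta p1 p2 p3 a b"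
    and o3: "path_image p3 - {a,b} \<subseteq> outside (path_image p1 \<union> path_image p2)"
    and o2: "path_image p2 - {a,b} \<subseteq> outside (path_image p1 \<union> path_image p3)"
    and o1: "path_image p1 - {a,b} \<subseteq> outside (path_image p2 \<union> path_image p3)"
  shows False
proof -
  note b = theta_basic[OF th]
  note c12 = theta_cycle[OF th]
  note c13 = theta_cycle[OF theta_perm(2)[OF th]]
  note c23 = theta_cycle[OF theta_perm(3)[OF th]]
  have u21: "path_image p2 \<union> path_image p1 = path_image p1 \<union> path_image p2" by (rule Un_commute)
  have u31: "path_image p3 \<union> path_image p1 = path_image p1 \<union> path_image p3" by (rule Un_commute)
  have u32: "path_image p3 \<union> path_image p2 = path_image p2 \<union> path_image p3" by (rule Un_commute)
  have i12: "inside (path_image p1 \<union> path_image p2) \<subseteq> outside (path_image p1 \<union> path_image p3)"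
    by (rule theta_in_out[OF th o3 o2])
  have i23a: "inside (path_image p2 \<union> path_image p3) \<subseteq> outside (path_image p1 \<union> path_image p2)"
    using theta_in_out[OF theta_perm(3)[OF th] o1] o3 unfolding u21 by blast
  have i23b: "inside (path_image p2 \<union> path_image p3) \<subseteq> outside (path_image p1 \<union> path_image p3)"
    using theta_in_out[OF theta_perm(5)[OF th]] o1 o2 unfolding u31 u32 by blast
  define S where "S = path_image p1 \<union> path_image p2 \<union> inside (path_image p1 \<union> path_image p2)"
  define T where "T = path_image p1 \<union> path_image p3 \<union> inside (path_image p1 \<union> path_image p3)"
  have S: "- S = outside (path_image p1 \<union> path_image p2)" unfolding S_def by (simp add: outside_inside)
  have T: "- T = outside (path_image p1 \<union> path_image p3)" unfolding T_def by (simp add: outside_inside)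
  have "open (- S)" unfolding S by (rule open_outside[OF c12(6)])
  then have "closed S" by (simp add: closed_open)
  moreover have "bounded S" unfolding S_def using c12(5,7) by simp
  ultimately have "compact S" by (simp add: compact_eq_bounded_closed)
  have "open (- T)" unfolding T by (rule open_outside[OF c13(6)])
  then have "closed T" by (simp add: closed_open)
  have "bounded T" unfolding T_def using c13(5,7) by simp
  have ST: "S \<inter> T = path_image p1"
  proof
    show "path_image p1 \<subseteq> S \<inter> T" unfolding S_def T_def by blast
    have y1: "inside (path_image p1 \<union> path_image p3) \<inter> outside (path_image p1 \<union> path_image p3) = {}"
      by (rule inside_Int_outside)
    have y2: "inside (path_image p1 \<union> path_image p2) \<inter> outside (path_image p1 \<union> path_image p2) = {}"
      by (rule inside_Int_outside)
    have y3: "inside (path_image p1 \<union> path_image p3) \<inter> (path_image p1 \<union> path_image p3) = {}"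
      by (rule inside_no_overlap)
    have y4: "inside (path_image p1 \<union> path_image p2) \<inter> (path_image p1 \<union> path_image p2) = {}"
      by (rule inside_no_overlap)
    have x1: "path_image p2 \<inter> inside (path_image p1 \<union> path_image p3) = {}"
      using o2 b(2,3) y1 y3 by blast
    have x2: "path_image p3 \<inter> inside (path_image p1 \<union> path_image p2) = {}"
      using o3 b(2,3) y2 y4 by blast
    have x3: "inside (path_image p1 \<union> path_image p2) \<inter> inside (path_image p1 \<union> path_image p3) = {}"
      using i12 y1 by blast
    have "S \<inter> T \<subseteq> path_image p1 \<union> (path_image p2 \<inter> path_image p3)
       \<union> (path_image p2 \<inter> inside (path_image p1 \<union> path_image p3))
       \<union> (path_image p3 \<inter> inside (path_image p1 \<union> path_image p2))
       \<union> (inside (path_image p1 \<union> path_image p2) \<inter> inside (path_image p1 \<union> path_image p3))"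
      unfolding S_def T_def by blast
    then show "S \<inter> T \<subseteq> path_image p1"
      unfolding x1 x2 x3 b(16) using b(2,3) by blast
  qed
  have "connected (- (S \<union> T))"
  proof (rule Janiszewski_connected)
    show "connected (S \<inter> T)" unfolding ST using th unfolding theta_def
      by (auto intro: connected_path_image arc_imp_path)
    show "connected (- S)" using S c12 by simp
    show "connected (- T)" using T c13 by simp
    show "compact S" by fact
    show "closed T" by fact
  qed
  moreover have "- (S \<union> T) \<inter> (path_image p2 \<union> path_image p3) = {}" unfolding S_def T_def by blast
  ultimately have D: "- (S \<union> T) \<subseteq> inside (path_image p2 \<union> path_image p3) \<or>
      - (S \<union> T) \<subseteq> outside (path_image p2 \<union> path_image p3)"
    by (rule connected_in_inside_or_outside[OF _ _ c23(6)])
  have W: "inside (path_image p2 \<union> path_image p3) \<subseteq> - (S \<union> T)"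
    using i23a i23b unfolding S[symmetric] T[symmetric] by blast
  have "bounded (S \<union> T)" using \<open>bounded S\<close> \<open>bounded T\<close> by simp
  then have "\<not> bounded (- (S \<union> T))"
    by (intro cobounded_imp_unbounded) simp
  then have "\<not> - (S \<union> T) \<subseteq> inside (path_image p2 \<union> path_image p3)"
    using c23(5) bounded_subset by blast
  with D have "- (S \<union> T) \<subseteq> outside (path_image p2 \<union> path_image p3)" by blast
  moreover have "inside (path_image p2 \<union> path_image p3) \<inter> outside (path_image p2 \<union> path_image p3) = {}"
    by (rule inside_Int_outside)
  ultimately show False using W c23(1) by blast
qed

lemma theta_face_case:
  assumes th: "theta p1 p2 p3 a b"
    and i3: "path_image p3 - {a,b} \<subseteq> inside (path_image p1 \<union> path_image p2)"
    and K: "connected K" "K \<inter> (path_image p1 \<union> path_image p2 \<union> path_image p3) = {}"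
  shows "closure K \<inter> (path_image p1 - {a,b}) = {} \<or> closure K \<inter> (path_image p2 - {a,b}) = {}
         \<or> closure K \<inter> (path_image p3 - {a,b}) = {}"
proof -
  note b = theta_basic[OF th]
  note c12 = theta_cycle[OF th]
  note c13 = theta_cycle[OF theta_perm(2)[OF th]]
  note c23 = theta_cycle[OF theta_perm(3)[OF th]]
  have h: "arc p1" "arc p2" "arc p3" "pathstart p1 = a" "pathfinish p1 = b"
     "pathstart p2 = a" "pathfinish p2 = b" "pathstart p3 = a" "pathfinish p3 = b"
    using th unfolding theta_def by auto
  have ne: "path_image p3 \<inter> inside (path_image p1 \<union> path_image p2) \<noteq> {}"
    using i3 b(10) by blast
  obtain s1: "inside (path_image p1 \<union> path_image p3) \<inter> inside (path_image p2 \<union> path_image p3) = {}"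
    and s2: "inside (path_image p1 \<union> path_image p3) \<union> inside (path_image p2 \<union> path_image p3)
              \<union> (path_image p3 - {a,b}) = inside (path_image p1 \<union> path_image p2)"
    by (rule split_inside_simple_closed_curve[of p1 a b p2 p3])
      (use h b(1,14,15,16) ne in \<open>auto simp: arc_imp_simple_path\<close>)
  have "K \<inter> (path_image p1 \<union> path_image p2) = {}" using K(2) by blast
  then have "K \<subseteq> inside (path_image p1 \<union> path_image p2) \<or> K \<subseteq> outside (path_image p1 \<union> path_image p2)"
    by (rule connected_in_inside_or_outside[OF K(1) _ c12(6)])
  then show ?thesis
  proof
    assume Kout: "K \<subseteq> outside (path_image p1 \<union> path_image p2)"
    have "closure K \<subseteq> closure (outside (path_image p1 \<union> path_image p2))" using Kout by (rule closure_mono)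
    also have "\<dots> \<subseteq> (path_image p1 \<union> path_image p2) \<union> outside (path_image p1 \<union> path_image p2)"
      by (rule closure_outside_subset[OF c12(6)])
    finally have cK: "closure K \<subseteq> (path_image p1 \<union> path_image p2) \<union> outside (path_image p1 \<union> path_image p2)" .
    have y1: "inside (path_image p1 \<union> path_image p2) \<inter> outside (path_image p1 \<union> path_image p2) = {}"
      by (rule inside_Int_outside)
    have y2: "inside (path_image p1 \<union> path_image p2) \<inter> (path_image p1 \<union> path_image p2) = {}"
      by (rule inside_no_overlap)
    have "closure K \<inter> (path_image p3 - {a,b}) = {}"
      using cK i3 y1 y2 by blast
    then show ?thesis by blast
  next
    assume Kin: "K \<subseteq> inside (path_image p1 \<union> path_image p2)"
    have K2: "K \<subseteq> inside (path_image p1 \<union> path_image p3) \<union> inside (path_image p2 \<union> path_image p3)"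
      using Kin s2 K(2) by blast
    have "inside (path_image p1 \<union> path_image p3) \<inter> K = {} \<or> inside (path_image p2 \<union> path_image p3) \<inter> K = {}"
      by (rule connectedD[OF K(1) open_inside[OF c13(6)] open_inside[OF c23(6)]])
        (use s1 K2 in blast)+
    then have "K \<subseteq> inside (path_image p2 \<union> path_image p3) \<or> K \<subseteq> inside (path_image p1 \<union> path_image p3)"
      using K2 by blast
    then show ?thesis
    proof
      assume K23: "K \<subseteq> inside (path_image p2 \<union> path_image p3)"
      have "closure K \<subseteq> closure (inside (path_image p2 \<union> path_image p3))" using K23 by (rule closure_mono)
      also have "\<dots> \<subseteq> (path_image p2 \<union> path_image p3) \<union> inside (path_image p2 \<union> path_image p3)"
        by (rule closure_inside_subset[OF c23(6)])
      finally have cK: "closure K \<subseteq> (path_image p2 \<union> path_image p3) \<union> inside (path_image p2 \<union> path_image p3)" .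
      have "inside (path_image p2 \<union> path_image p3) \<subseteq> inside (path_image p1 \<union> path_image p2)" using s2 by blast
      moreover have "inside (path_image p1 \<union> path_image p2) \<inter> (path_image p1 \<union> path_image p2) = {}"
        by (rule inside_no_overlap)
      ultimately have "(path_image p1 - {a,b}) \<inter> inside (path_image p2 \<union> path_image p3) = {}"
        by blast
      then have "closure K \<inter> (path_image p1 - {a,b}) = {}" using cK b(14,15) by blast
      then show ?thesis by blast
    next
      assume K13: "K \<subseteq> inside (path_image p1 \<union> path_image p3)"
      have "closure K \<subseteq> closure (inside (path_image p1 \<union> path_image p3))" using K13 by (rule closure_mono)
      also have "\<dots> \<subseteq> (path_image p1 \<union> path_image p3) \<union> inside (path_image p1 \<union> path_image p3)"
        by (rule closure_inside_subset[OF c13(6)])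
      finally have cK: "closure K \<subseteq> (path_image p1 \<union> path_image p3) \<union> inside (path_image p1 \<union> path_image p3)" .
      have "inside (path_image p1 \<union> path_image p3) \<subseteq> inside (path_image p1 \<union> path_image p2)" using s2 by blast
      moreover have "inside (path_image p1 \<union> path_image p2) \<inter> (path_image p1 \<union> path_image p2) = {}"
        by (rule inside_no_overlap)
      ultimately have "(path_image p2 - {a,b}) \<inter> inside (path_image p1 \<union> path_image p3) = {}"
        by blast
      then have "closure K \<inter> (path_image p2 - {a,b}) = {}" using cK b(14,16) by blast
      then show ?thesis by blast
    qed
  qed
qed

lemma theta_face:
  assumes th: "theta p1 p2 p3 a b"
    and K: "connected K" "K \<inter> (path_image p1 \<union> path_image p2 \<union> path_image p3) = {}"
  shows "closure K \<inter> (path_image p1 - {a,b}) = {} \<or> closure K \<inter> (path_image p2 - {a,b}) = {}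
         \<or> closure K \<inter> (path_image p3 - {a,b}) = {}"
proof -
  note b = theta_basic[OF th]
  note c12 = theta_cycle[OF th]
  note c13 = theta_cycle[OF theta_perm(2)[OF th]]
  note c23 = theta_cycle[OF theta_perm(3)[OF th]]
  have d3: "(path_image p3 - {a,b}) \<inter> (path_image p1 \<union> path_image p2) = {}" using b(15,16) by blast
  have d2: "(path_image p2 - {a,b}) \<inter> (path_image p1 \<union> path_image p3) = {}" using b(14,16) by blast
  have d1: "(path_image p1 - {a,b}) \<inter> (path_image p2 \<union> path_image p3) = {}" using b(14,15) by blast
  have q3: "path_image p3 - {a,b} \<subseteq> inside (path_image p1 \<union> path_image p2) \<or> path_image p3 - {a,b} \<subseteq> outside (path_image p1 \<union> path_image p2)"
    by (rule connected_in_inside_or_outside[OF b(13) d3 c12(6)])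
  have q2: "path_image p2 - {a,b} \<subseteq> inside (path_image p1 \<union> path_image p3) \<or> path_image p2 - {a,b} \<subseteq> outside (path_image p1 \<union> path_image p3)"
    by (rule connected_in_inside_or_outside[OF b(12) d2 c13(6)])
  have q1: "path_image p1 - {a,b} \<subseteq> inside (path_image p2 \<union> path_image p3) \<or> path_image p1 - {a,b} \<subseteq> outside (path_image p2 \<union> path_image p3)"
    by (rule connected_in_inside_or_outside[OF b(11) d1 c23(6)])
  have "path_image p3 - {a,b} \<subseteq> inside (path_image p1 \<union> path_image p2) \<or>
        path_image p2 - {a,b} \<subseteq> inside (path_image p1 \<union> path_image p3) \<or>
        path_image p1 - {a,b} \<subseteq> inside (path_image p2 \<union> path_image p3)"
    using q1 q2 q3 theta_not_all_out[OF th] by blast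
  then show ?thesis
  proof (elim disjE)
    assume "path_image p3 - {a,b} \<subseteq> inside (path_image p1 \<union> path_image p2)"
    from theta_face_case[OF th this K] show ?thesis .
  next
    assume "path_image p2 - {a,b} \<subseteq> inside (path_image p1 \<union> path_image p3)"
    moreover have "K \<inter> (path_image p1 \<union> path_image p3 \<union> path_image p2) = {}" using K(2) by blast
    ultimately have "closure K \<inter> (path_image p1 - {a,b}) = {} \<or> closure K \<inter> (path_image p3 - {a,b}) = {}
         \<or> closure K \<inter> (path_image p2 - {a,b}) = {}"
      by (rule theta_face_case[OF theta_perm(2)[OF th] _ K(1)])
    then show ?thesis by blast
  next
    assume "path_image p1 - {a,b} \<subseteq> inside (path_image p2 \<union> path_image p3)"
    moreover have "K \<inter> (path_image p2 \<union> path_image p3 \<union> path_image p1) = {}" using K(2) by blast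
    ultimately have "closure K \<inter> (path_image p2 - {a,b}) = {} \<or> closure K \<inter> (path_image p3 - {a,b}) = {}
         \<or> closure K \<inter> (path_image p1 - {a,b}) = {}"
      by (rule theta_face_case[OF theta_perm(3)[OF th] _ K(1)])
    then show ?thesis by blast
  qed
qed

lemma K33_plane:
  fixes A B :: "nat \<Rightarrow> complex" and \<gamma> :: "nat \<Rightarrow> nat \<Rightarrow> real \<Rightarrow> complex"
  assumes arcs: "\<And>i j. i < 3 \<Longrightarrow> j < 3 \<Longrightarrow> arc (\<gamma> i j) \<and> pathstart (\<gamma> i j) = A i \<and> pathfinish (\<gamma> i j) = B j"
    and disj: "\<And>i j i' j'. i < 3 \<Longrightarrow> j < 3 \<Longrightarrow> i' < 3 \<Longrightarrow> j' < 3 \<Longrightarrow> (i,j) \<noteq> (i',j') \<Longrightarrow>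
      path_image (\<gamma> i j) \<inter> path_image (\<gamma> i' j') \<subseteq> (if i = i' then {A i} else {}) \<union> (if j = j' then {B j} else {})"
  shows False
proof -
  have ar: "arc (\<gamma> i j)" "pathstart (\<gamma> i j) = A i" "pathfinish (\<gamma> i j) = B j"
     "A i \<in> path_image (\<gamma> i j)" "B j \<in> path_image (\<gamma> i j)" "A i \<noteq> B j"
    if "i < 3" "j < 3" for i j
  proof -
    show a: "arc (\<gamma> i j)" "pathstart (\<gamma> i j) = A i" "pathfinish (\<gamma> i j) = B j" using arcs that by auto
    then show "A i \<in> path_image (\<gamma> i j)" "B j \<in> path_image (\<gamma> i j)"
      using pathstart_in_path_image pathfinish_in_path_image by metis+
    show "A i \<noteq> B j" using arc_distinct_ends[OF a(1)] a by simp
  qed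
  define P where "P l = \<gamma> 0 l +++ reversepath (\<gamma> 1 l)" for l
  have Pl: "arc (P l) \<and> pathstart (P l) = A 0 \<and> pathfinish (P l) = A 1
      \<and> path_image (P l) = path_image (\<gamma> 0 l) \<union> path_image (\<gamma> 1 l)" if l: "l < 3" for l
  proof -
    have "path_image (\<gamma> 0 l) \<inter> path_image (\<gamma> 1 l) \<subseteq> {B l}" using disj[of 0 l 1 l] l by auto
    then have "arc (P l)" unfolding P_def using ar[of 0 l] ar[of 1 l] l
      by (intro arc_join) (auto simp: arc_reversepath)
    then show ?thesis using ar[of 0 l] ar[of 1 l] l by (simp add: P_def path_image_join)
  qed
  have A01: "A 0 \<noteq> A 1"
  proof
    assume eq: "A 0 = A 1"
    have "A 0 \<in> path_image (\<gamma> 0 0) \<inter> path_image (\<gamma> 1 0)" using ar(4)[of 0 0] ar(4)[of 1 0] eq by simp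
    then have "A 0 = B 0" using disj[of 0 0 1 0] by auto
    then show False using ar(6)[of 0 0] by simp
  qed
  have Pint: "path_image (P l) \<inter> path_image (P l') = {A 0, A 1}" if "l < 3" "l' < 3" "l \<noteq> l'" for l l'
  proof
    have "path_image (\<gamma> 0 l) \<inter> path_image (\<gamma> 0 l') \<subseteq> {A 0}" using disj[of 0 l 0 l'] that by auto
    moreover have "path_image (\<gamma> 0 l) \<inter> path_image (\<gamma> 1 l') \<subseteq> {}" using disj[of 0 l 1 l'] that by auto
    moreover have "path_image (\<gamma> 1 l) \<inter> path_image (\<gamma> 0 l') \<subseteq> {}" using disj[of 1 l 0 l'] that by auto
    moreover have "path_image (\<gamma> 1 l) \<inter> path_image (\<gamma> 1 l') \<subseteq> {A 1}" using disj[of 1 l 1 l'] that by auto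
    ultimately show "path_image (P l) \<inter> path_image (P l') \<subseteq> {A 0, A 1}" using Pl that by blast
    show "{A 0, A 1} \<subseteq> path_image (P l) \<inter> path_image (P l')"
      using Pl that ar(4)[of 0 l] ar(4)[of 0 l'] ar(4)[of 1 l] ar(4)[of 1 l'] by auto
  qed
  have th: "theta (P 0) (P 1) (P 2) (A 0) (A 1)"
    unfolding theta_def using Pl[of 0] Pl[of 1] Pl[of 2] Pint[of 0 1] Pint[of 0 2] Pint[of 1 2] by simp
  have Kj: "connected (path_image (\<gamma> 2 j) - {B j})" "A 2 \<in> path_image (\<gamma> 2 j) - {B j}"
      "B j \<in> closure (path_image (\<gamma> 2 j) - {B j})" if "j < 3" for j
  proof -
    show "connected (path_image (\<gamma> 2 j) - {B j})" using arc_minus_finish_connected[OF ar(1)[of 2 j]] ar(3)[of 2 j] that by simp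
    show "A 2 \<in> path_image (\<gamma> 2 j) - {B j}" using ar(4,6)[of 2 j] that by simp
    show "B j \<in> closure (path_image (\<gamma> 2 j) - {B j})" using arc_finish_in_closure[OF ar(1)[of 2 j]] ar(3)[of 2 j] that by simp
  qed
  define K where "K = (path_image (\<gamma> 2 0) - {B 0}) \<union> (path_image (\<gamma> 2 1) - {B 1}) \<union> (path_image (\<gamma> 2 2) - {B 2})"
  have "connected ((path_image (\<gamma> 2 0) - {B 0}) \<union> (path_image (\<gamma> 2 1) - {B 1}))"
    using Kj[of 0] Kj[of 1] by (intro connected_Un) auto
  then have cK: "connected K" unfolding K_def
    using Kj[of 0] Kj[of 2] by (rule_tac connected_Un) auto
  have dj: "(path_image (\<gamma> 2 j) - {B j}) \<inter> path_image (\<gamma> i l) = {}" if "j < 3" "l < 3" "i < 2" for i j l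
    using disj[of 2 j i l] that by (auto split: if_splits)
  have KP: "K \<inter> path_image (P l) = {}" if "l < 3" for l
    unfolding K_def using Pl[OF that] dj[of 0 l 0] dj[of 1 l 0] dj[of 2 l 0] dj[of 0 l 1] dj[of 1 l 1] dj[of 2 l 1] that
    by auto
  have "K \<inter> (path_image (P 0) \<union> path_image (P 1) \<union> path_image (P 2)) = {}"
    using KP[of 0] KP[of 1] KP[of 2] by auto
  from theta_face[OF th cK this]
  obtain l where l: "l < 3" "closure K \<inter> (path_image (P l) - {A 0, A 1}) = {}"
  proof (elim disjE)
    assume "closure K \<inter> (path_image (P 0) - {A 0, A 1}) = {}"
    then show thesis using that[of 0] by simp
  next
    assume "closure K \<inter> (path_image (P 1) - {A 0, A 1}) = {}"
    then show thesis using that[of 1] by simp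
  next
    assume "closure K \<inter> (path_image (P 2) - {A 0, A 1}) = {}"
    then show thesis using that[of 2] by simp
  qed
  have "B l \<in> closure K"
  proof -
    have "l = 0 \<or> l = 1 \<or> l = 2" using l(1) by auto
    then have "path_image (\<gamma> 2 l) - {B l} \<subseteq> K" unfolding K_def by (elim disjE) blast+
    then show ?thesis using Kj(3)[OF l(1)] closure_mono by blast
  qed
  moreover have "B l \<in> path_image (P l) - {A 0, A 1}"
    using Pl[OF l(1)] ar(5)[of 0 l] ar(6)[of 0 l] ar(6)[of 1 l] l(1) by auto
  ultimately show False using l(2) by blast
qed


definition edgepath :: "('b \<Rightarrow> complex) \<Rightarrow> ('b set \<Rightarrow> real \<Rightarrow> complex) \<Rightarrow> 'b \<Rightarrow> 'b \<Rightarrow> real \<Rightarrow> complex" where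
  "edgepath f g u v = (if pathstart (g {u,v}) = f u then g {u,v} else reversepath (g {u,v}))"

fun vpath :: "('b \<Rightarrow> complex) \<Rightarrow> ('b set \<Rightarrow> real \<Rightarrow> complex) \<Rightarrow> 'b list \<Rightarrow> real \<Rightarrow> complex" where
  "vpath f g [u, v] = edgepath f g u v"
| "vpath f g (u # v # w # rest) = edgepath f g u v +++ vpath f g (v # w # rest)"
| "vpath f g _ = linepath 0 0"

fun edges_of :: "'b list \<Rightarrow> 'b set set" where
  "edges_of (u # v # rest) = insert {u,v} (edges_of (v # rest))"
| "edges_of _ = {}"

lemma edges_of_subset: "e \<in> edges_of vs \<Longrightarrow> e \<subseteq> set vs"
  by (induction vs rule: edges_of.induct) auto

lemma edges_of_two: "distinct vs \<Longrightarrow> e \<in> edges_of vs \<Longrightarrow> \<exists>u v. e = {u,v} \<and> u \<noteq> v"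
  by (induction vs rule: edges_of.induct) auto

lemma edges_of_graph_edges:
  "set vs \<subseteq> W \<Longrightarrow> successively R vs \<Longrightarrow> edges_of vs \<subseteq> graph_edges W R"
  by (induction vs rule: edges_of.induct) (auto simp: graph_edges_def)

locale emb =
  fixes W :: "'b set" and R :: "'b \<Rightarrow> 'b \<Rightarrow> bool" and f :: "'b \<Rightarrow> complex" and g :: "'b set \<Rightarrow> real \<Rightarrow> complex"
  assumes injf: "inj_on f W"
    and edge: "\<And>u v. u \<in> W \<Longrightarrow> v \<in> W \<Longrightarrow> R u v \<Longrightarrow>
          arc (g {u, v}) \<and> {pathstart (g {u, v}), pathfinish (g {u, v})} = {f u, f v}
          \<and> path_image (g {u, v}) \<inter> f ` W = {f u, f v}"
    and cross: "\<And>e e'. e \<in> graph_edges W R \<Longrightarrow> e' \<in> graph_edges W R \<Longrightarrow> e \<noteq> e' \<Longrightarrow>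
          path_image (g e) \<inter> path_image (g e') \<subseteq> f ` (e \<inter> e')"
begin

lemma edgepath_props:
  assumes "u \<in> W" "v \<in> W" "R u v" "u \<noteq> v"
  shows "arc (edgepath f g u v) \<and> pathstart (edgepath f g u v) = f u \<and> pathfinish (edgepath f g u v) = f v
     \<and> path_image (edgepath f g u v) = path_image (g {u,v})"
proof -
  have e: "arc (g {u, v})" "{pathstart (g {u, v}), pathfinish (g {u, v})} = {f u, f v}"
    using edge[OF assms(1-3)] by auto
  have "f u \<noteq> f v" using injf assms by (auto dest: inj_onD)
  have "pathstart (g {u,v}) \<noteq> pathfinish (g {u,v})" using arc_distinct_ends[OF e(1)] by auto
  show ?thesis
  proof (cases "pathstart (g {u,v}) = f u")
    case True
    then have "pathfinish (g {u,v}) = f v" using e(2) \<open>f u \<noteq> f v\<close> by (auto simp: doubleton_eq_iff)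
    then show ?thesis using True e by (simp add: edgepath_def)
  next
    case False
    then have "pathstart (g {u,v}) = f v" "pathfinish (g {u,v}) = f u" using e(2) by (auto simp: doubleton_eq_iff)
    then show ?thesis using False e by (simp add: edgepath_def arc_reversepath)
  qed
qed

lemma vpath_props:
  assumes "distinct vs" "set vs \<subseteq> W" "successively R vs" "2 \<le> length vs"
  shows "arc (vpath f g vs) \<and> pathstart (vpath f g vs) = f (hd vs) \<and> pathfinish (vpath f g vs) = f (last vs)
     \<and> path_image (vpath f g vs) = (\<Union>e\<in>edges_of vs. path_image (g e))"
  using assms
proof (induction vs rule: edges_of.induct)
  case (1 u v rest)
  show ?case
  proof (cases rest)
    case Nil
    then show ?thesis using 1 edgepath_props[of u v] by auto
  next
    case (Cons w rest')
    let ?r = "v # w # rest'"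
    have IH: "arc (vpath f g ?r) \<and> pathstart (vpath f g ?r) = f v \<and> pathfinish (vpath f g ?r) = f (last ?r)
       \<and> path_image (vpath f g ?r) = (\<Union>e\<in>edges_of ?r. path_image (g e))"
      using 1 Cons by auto
    have E: "arc (edgepath f g u v) \<and> pathstart (edgepath f g u v) = f u \<and> pathfinish (edgepath f g u v) = f v
       \<and> path_image (edgepath f g u v) = path_image (g {u,v})"
      using 1 Cons edgepath_props[of u v] by auto
    have ge: "edges_of (u # ?r) \<subseteq> graph_edges W R"
      using 1 Cons by (intro edges_of_graph_edges) auto
    have inter: "path_image (g {u,v}) \<inter> (\<Union>e\<in>edges_of ?r. path_image (g e)) \<subseteq> {f v}"
    proof
      fix x assume x: "x \<in> path_image (g {u,v}) \<inter> (\<Union>e\<in>edges_of ?r. path_image (g e))"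
      then obtain e where e: "e \<in> edges_of ?r" "x \<in> path_image (g e)" by auto
      have "e \<subseteq> set ?r" using e(1) by (rule edges_of_subset)
      then have "u \<notin> e" using 1(2) Cons by auto
      then have "e \<noteq> {u,v}" by auto
      moreover have "{u,v} \<in> graph_edges W R" "e \<in> graph_edges W R" using ge e(1) by auto
      ultimately have "x \<in> f ` ({u,v} \<inter> e)" using cross x e(2) by blast
      then show "x \<in> {f v}" using \<open>u \<notin> e\<close> by auto
    qed
    have arcj: "arc (edgepath f g u v +++ vpath f g ?r)"
      using E IH inter by (intro arc_join) auto
    show ?thesis using arcj E IH Cons by (simp add: path_image_join)
  qed
qed auto

lemma vpath_inter:
  assumes "distinct vs" "set vs \<subseteq> W" "successively R vs" "2 \<le> length vs"
    and "distinct ws" "set ws \<subseteq> W" "successively R ws" "2 \<le> length ws"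
    and "set vs \<inter> set ws \<subseteq> {x}"
  shows "path_image (vpath f g vs) \<inter> path_image (vpath f g ws) \<subseteq> f ` (set vs \<inter> set ws)"
proof
  fix y assume y: "y \<in> path_image (vpath f g vs) \<inter> path_image (vpath f g ws)"
  then obtain e e' where e: "e \<in> edges_of vs" "e' \<in> edges_of ws" "y \<in> path_image (g e)" "y \<in> path_image (g e')"
    using vpath_props[OF assms(1-4)] vpath_props[OF assms(5-8)] by auto
  have "e \<noteq> e'"
  proof
    assume "e = e'"
    then have "e \<subseteq> set vs \<inter> set ws" using e edges_of_subset by blast
    moreover obtain u v where "e = {u,v}" "u \<noteq> v" using edges_of_two[OF assms(1) e(1)] by auto
    ultimately show False using assms(9) by auto
  qed
  moreover have "e \<in> graph_edges W R" "e' \<in> graph_edges W R"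
    using e edges_of_graph_edges assms by blast+
  ultimately have "y \<in> f ` (e \<inter> e')" using cross e by blast
  then show "y \<in> f ` (set vs \<inter> set ws)" using e edges_of_subset by blast
qed

end


definition pstep :: "nat set \<Rightarrow> nat set \<Rightarrow> bool" where
  "pstep A B \<longleftrightarrow> (\<exists>i\<in>{0..<6}. (A - B) \<union> (B - A) = {i, Suc i})"

definition aa :: "nat \<Rightarrow> nat set" where "aa i = [{1,2,5},{0,2,5},{1,3,4}] ! i"
definition bb :: "nat \<Rightarrow> nat set" where "bb j = [{1,3,5},{1,2,6},{1,2,4}] ! j"
definition LL :: "nat \<Rightarrow> nat \<Rightarrow> nat set list" where
  "LL i j = [[[{1,2,5},{1,3,5}], [{1,2,5},{1,2,6}], [{1,2,5},{1,2,4}]],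
           [[{0,2,5},{0,3,5},{1,3,5}], [{0,2,5},{0,2,6},{1,2,6}], [{0,2,5},{0,2,4},{1,2,4}]],
           [[{1,3,4},{1,3,5}], [{1,3,4},{2,3,4},{2,3,5},{2,3,6},{1,3,6},{1,2,6}], [{1,3,4},{1,2,4}]]] ! i ! j"

lemma LL_ok_all:
  "\<forall>i\<in>{0..<3}. \<forall>j\<in>{0..<3}. distinct (LL i j) \<and> (\<forall>A\<in>set (LL i j). A \<subseteq> {0..<7} \<and> card A = 3)
     \<and> successively pstep (LL i j) \<and> 2 \<le> length (LL i j) \<and> hd (LL i j) = aa i \<and> last (LL i j) = bb j"
  unfolding LL_def aa_def bb_def pstep_def by code_simp

lemma LL_ok:
  assumes "i < 3" "j < 3"
  shows "distinct (LL i j)" "\<forall>A\<in>set (LL i j). A \<subseteq> {0..<7} \<and> card A = 3"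
     "successively pstep (LL i j)" "2 \<le> length (LL i j)" "hd (LL i j) = aa i" "last (LL i j) = bb j"
  using LL_ok_all assms by auto

lemma LL_disj_all:
  "\<forall>i\<in>{0..<3}. \<forall>j\<in>{0..<3}. \<forall>i'\<in>{0..<3}. \<forall>j'\<in>{0..<3}. (i,j) \<noteq> (i',j') \<longrightarrow>
     set (LL i j) \<inter> set (LL i' j') \<subseteq> (if i = i' then {aa i} else {}) \<union> (if j = j' then {bb j} else {})"
  unfolding LL_def aa_def bb_def by code_simp


lemma planar_no_K33:
  fixes a b :: "nat \<Rightarrow> 'b" and L :: "nat \<Rightarrow> nat \<Rightarrow> 'b list"
  assumes pl: "planar W R"
    and Lok: "\<And>i j. i < 3 \<Longrightarrow> j < 3 \<Longrightarrow> distinct (L i j) \<and> set (L i j) \<subseteq> W \<and> successively R (L i j)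
        \<and> 2 \<le> length (L i j) \<and> hd (L i j) = a i \<and> last (L i j) = b j"
    and Ldisj: "\<And>i j i' j'. i < 3 \<Longrightarrow> j < 3 \<Longrightarrow> i' < 3 \<Longrightarrow> j' < 3 \<Longrightarrow> (i,j) \<noteq> (i',j') \<Longrightarrow>
        set (L i j) \<inter> set (L i' j') \<subseteq> (if i = i' then {a i} else {}) \<union> (if j = j' then {b j} else {})"
  shows False
proof -
  obtain f g where fg: "emb W R f g"
  proof -
    from pl obtain f :: "'b \<Rightarrow> complex" and g where
      H: "inj_on f W \<and> (\<forall>u\<in>W. \<forall>v\<in>W. R u v \<longrightarrow>
          arc (g {u, v}) \<and> {pathstart (g {u, v}), pathfinish (g {u, v})} = {f u, f v}
          \<and> path_image (g {u, v}) \<inter> f ` W = {f u, f v}) \<and>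
      (\<forall>e\<in>graph_edges W R. \<forall>e'\<in>graph_edges W R. e \<noteq> e' \<longrightarrow>
          path_image (g e) \<inter> path_image (g e') \<subseteq> f ` (e \<inter> e'))"
      unfolding planar_def by (elim exE)
    have "emb W R f g"
    proof
      show "inj_on f W" using H by (rule conjunct1)
      show "arc (g {u, v}) \<and> {pathstart (g {u, v}), pathfinish (g {u, v})} = {f u, f v}
          \<and> path_image (g {u, v}) \<inter> f ` W = {f u, f v}" if "u \<in> W" "v \<in> W" "R u v" for u v
        using H that by blast
      show "path_image (g e) \<inter> path_image (g e') \<subseteq> f ` (e \<inter> e')"
        if "e \<in> graph_edges W R" "e' \<in> graph_edges W R" "e \<noteq> e'" for e e'
        using H that by blast
    qed
    then show thesis by (rule that)
  qed
  then interpret emb W R f g .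
  show False
  proof (rule K33_plane[where \<gamma> = "\<lambda>i j. vpath f g (L i j)" and A = "\<lambda>i. f (a i)" and B = "\<lambda>j. f (b j)"])
    fix i j :: nat assume ij: "i < 3" "j < 3"
    then show "arc (vpath f g (L i j)) \<and> pathstart (vpath f g (L i j)) = f (a i) \<and> pathfinish (vpath f g (L i j)) = f (b j)"
      using vpath_props[of "L i j"] Lok[OF ij] by simp
  next
    fix i j i' j' :: nat assume ij: "i < 3" "j < 3" "i' < 3" "j' < 3" "(i,j) \<noteq> (i',j')"
    define x where "x = (if i = i' then a i else b j)"
    have D: "set (L i j) \<inter> set (L i' j') \<subseteq> (if i = i' then {a i} else {}) \<union> (if j = j' then {b j} else {})"
      by (rule Ldisj[OF ij])
    have sub: "set (L i j) \<inter> set (L i' j') \<subseteq> {x}" using D ij(5) by (auto simp: x_def split: if_splits)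
    have L1: "distinct (L i j)" "set (L i j) \<subseteq> W" "successively R (L i j)" "2 \<le> length (L i j)"
      using Lok[OF ij(1,2)] by auto
    have L2: "distinct (L i' j')" "set (L i' j') \<subseteq> W" "successively R (L i' j')" "2 \<le> length (L i' j')"
      using Lok[OF ij(3,4)] by auto
    have "path_image (vpath f g (L i j)) \<inter> path_image (vpath f g (L i' j')) \<subseteq> f ` (set (L i j) \<inter> set (L i' j'))"
      by (rule vpath_inter[OF L1 L2 sub])
    also have "\<dots> \<subseteq> f ` ((if i = i' then {a i} else {}) \<union> (if j = j' then {b j} else {}))"
      using D by (rule image_mono)
    finally show "path_image (vpath f g (L i j)) \<inter> path_image (vpath f g (L i' j'))
       \<subseteq> (if i = i' then {f (a i)} else {}) \<union> (if j = j' then {f (b j)} else {})"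
      by (auto split: if_splits)
  qed
qed

lemma no_planar_if_embedding:
  fixes \<phi> :: "nat set \<Rightarrow> 'a set"
  assumes inj: "inj_on \<phi> {A. A \<subseteq> {0..<7}}"
    and vert: "\<And>A. A \<subseteq> {0..<7} \<Longrightarrow> card A = 3 \<Longrightarrow> \<phi> A \<in> token_vertices V k"
    and adj: "\<And>A B. A \<subseteq> {0..<7} \<Longrightarrow> B \<subseteq> {0..<7} \<Longrightarrow> pstep A B \<Longrightarrow> token_adj E (\<phi> A) (\<phi> B)"
  shows "\<not> planar (token_vertices V k) (token_adj E)"
proof
  assume pl: "planar (token_vertices V k) (token_adj E)"
  show False
  proof (rule planar_no_K33[OF pl, where L = "\<lambda>i j. map \<phi> (LL i j)" and a = "\<lambda>i. \<phi> (aa i)" and b = "\<lambda>j. \<phi> (bb j)"])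
    fix i j :: nat assume ij: "i < 3" "j < 3"
    have ok: "distinct (LL i j)" "\<forall>A\<in>set (LL i j). A \<subseteq> {0..<7} \<and> card A = 3"
     "successively pstep (LL i j)" "2 \<le> length (LL i j)" "hd (LL i j) = aa i" "last (LL i j) = bb j"
      using LL_ok[OF ij] by auto
    have injL: "inj_on \<phi> (set (LL i j))" by (rule inj_on_subset[OF inj]) (use ok(2) in auto)
    have "distinct (map \<phi> (LL i j))" using ok(1) injL by (simp add: distinct_map)
    moreover have "set (map \<phi> (LL i j)) \<subseteq> token_vertices V k" using ok(2) vert by auto
    moreover have "successively (token_adj E) (map \<phi> (LL i j))"
      unfolding successively_map using ok(3) by (rule successively_mono) (use ok(2) adj in auto)
    moreover have "LL i j \<noteq> []" using ok(4) by auto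
    ultimately show "distinct (map \<phi> (LL i j)) \<and> set (map \<phi> (LL i j)) \<subseteq> token_vertices V k \<and>
         successively (token_adj E) (map \<phi> (LL i j)) \<and> 2 \<le> length (map \<phi> (LL i j)) \<and>
         hd (map \<phi> (LL i j)) = \<phi> (aa i) \<and> last (map \<phi> (LL i j)) = \<phi> (bb j)"
      using ok by (simp add: hd_map last_map)
  next
    fix i j i' j' :: nat assume ij: "i < 3" "j < 3" "i' < 3" "j' < 3" "(i,j) \<noteq> (i',j')"
    have D: "set (LL i j) \<inter> set (LL i' j') \<subseteq> (if i = i' then {aa i} else {}) \<union> (if j = j' then {bb j} else {})"
      using LL_disj_all ij by auto
    have s1: "set (LL i j) \<subseteq> {A. A \<subseteq> {0..<7}}" "set (LL i' j') \<subseteq> {A. A \<subseteq> {0..<7}}"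
      using LL_ok(2)[of i j] LL_ok(2)[of i' j'] ij by auto
    have "set (map \<phi> (LL i j)) \<inter> set (map \<phi> (LL i' j')) = \<phi> ` (set (LL i j) \<inter> set (LL i' j'))"
      using inj_on_image_Int[OF inj s1] by simp
    also have "\<dots> \<subseteq> \<phi> ` ((if i = i' then {aa i} else {}) \<union> (if j = j' then {bb j} else {}))"
      using D by (rule image_mono)
    finally show "set (map \<phi> (LL i j)) \<inter> set (map \<phi> (LL i' j'))
       \<subseteq> (if i = i' then {\<phi> (aa i)} else {}) \<union> (if j = j' then {\<phi> (bb j)} else {})"
      by (auto split: if_splits)
  qed
qed

lemma sd_image:
  assumes "inj_on h S" "P \<subseteq> S" "Q \<subseteq> S" "T \<inter> h ` S = {}"
  shows "(h ` P \<union> T - (h ` Q \<union> T)) \<union> (h ` Q \<union> T - (h ` P \<union> T)) = h ` ((P - Q) \<union> (Q - P))"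
proof -
  have "h ` P \<union> T - (h ` Q \<union> T) = h ` P - h ` Q" using assms by blast
  also have "\<dots> = h ` (P - Q)" using assms by (metis Diff_subset inj_on_image_set_diff order_trans)
  finally have 1: "h ` P \<union> T - (h ` Q \<union> T) = h ` (P - Q)" .
  have "h ` Q \<union> T - (h ` P \<union> T) = h ` Q - h ` P" using assms by blast
  also have "\<dots> = h ` (Q - P)" using assms by (metis Diff_subset inj_on_image_set_diff order_trans)
  finally have 2: "h ` Q \<union> T - (h ` P \<union> T) = h ` (Q - P)" .
  show ?thesis unfolding 1 2 by (simp add: image_Un)
qed
lemma phi_props:
  fixes xs :: "'a list" and X :: "nat set \<Rightarrow> nat set"
  assumes fin: "finite V"
    and xs: "length xs = 7" "distinct xs" "set xs \<subseteq> V" "\<And>i. Suc i < 7 \<Longrightarrow> E (xs ! i) (xs ! Suc i)"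
    and T: "T \<subseteq> V - set xs" "card T + m = k"
    and Xok: "\<And>A. A \<subseteq> {0..<7} \<Longrightarrow> card A = 3 \<Longrightarrow> card (X A) = m"
    and Xinj: "inj_on X {A. A \<subseteq> {0..<7}}"
    and Xsub: "\<And>A. A \<subseteq> {0..<7} \<Longrightarrow> X A \<subseteq> {0..<7}"
    and Xsd: "\<And>A B. A \<subseteq> {0..<7} \<Longrightarrow> B \<subseteq> {0..<7} \<Longrightarrow> (X A - X B) \<union> (X B - X A) = (A - B) \<union> (B - A)"
  shows "\<not> planar (token_vertices V k) (token_adj E)"
proof -
  let ?h = "\<lambda>i. xs ! i"
  have injh: "inj_on ?h {0..<7}" using xs by (intro inj_on_nth) auto
  have hS: "?h ` {0..<7} = set xs" using xs(1) by (auto simp: set_conv_nth)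
  have TS: "T \<inter> ?h ` {0..<7} = {}" using T(1) hS by auto
  have finT: "finite T" using T(1) fin finite_subset by blast
  show ?thesis
  proof (rule no_planar_if_embedding[where \<phi> = "\<lambda>A. ?h ` X A \<union> T"])
    show "inj_on (\<lambda>A. ?h ` X A \<union> T) {A. A \<subseteq> {0..<7}}"
    proof (rule inj_onI)
      fix A B assume AB: "A \<in> {A. A \<subseteq> {0..<7}}" "B \<in> {A. A \<subseteq> {0..<7}}" "?h ` X A \<union> T = ?h ` X B \<union> T"
      have sA: "?h ` X A \<subseteq> ?h ` {0..<7}" "?h ` X B \<subseteq> ?h ` {0..<7}" using Xsub AB by blast+
      have "?h ` X A = ?h ` X B" using AB(3) sA TS by blast
      then have "X A = X B" using injh Xsub AB by (simp add: inj_on_image_eq_iff)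
      then show "A = B" using Xinj AB by (auto dest: inj_onD)
    qed
  next
    fix A :: "nat set" assume A: "A \<subseteq> {0..<7}" "card A = 3"
    have "?h ` X A \<subseteq> set xs" using Xsub[OF A(1)] hS by blast
    then have sub: "?h ` X A \<union> T \<subseteq> V" using xs(3) T(1) by blast
    have "card (?h ` X A) = card (X A)" using injh Xsub[OF A(1)] by (metis card_image inj_on_subset)
    moreover have "?h ` X A \<inter> T = {}" using TS Xsub[OF A(1)] by blast
    moreover have "finite (?h ` X A)" using Xsub[OF A(1)] finite_subset by blast
    ultimately have "card (?h ` X A \<union> T) = m + card T" using Xok[OF A] finT by (simp add: card_Un_disjoint)
    then show "?h ` X A \<union> T \<in> token_vertices V k" using sub T(2) by (simp add: token_vertices_def)
  next
    fix A B :: "nat set" assume A: "A \<subseteq> {0..<7}" and B: "B \<subseteq> {0..<7}" and st: "pstep A B"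
    then obtain i where i: "i < 6" "(A - B) \<union> (B - A) = {i, Suc i}" unfolding pstep_def by auto
    have "(?h ` X A \<union> T - (?h ` X B \<union> T)) \<union> (?h ` X B \<union> T - (?h ` X A \<union> T)) = ?h ` ((X A - X B) \<union> (X B - X A))"
      by (rule sd_image[OF injh Xsub[OF A] Xsub[OF B] TS])
    also have "\<dots> = {xs ! i, xs ! Suc i}" using Xsd[OF A B] i(2) by simp
    finally show "token_adj E (?h ` X A \<union> T) (?h ` X B \<union> T)"
      unfolding token_adj_def using xs(4)[of i] i(1) by auto
  qed
qed

theorem theorem8:
  fixes V :: "'a set" and E :: "'a \<Rightarrow> 'a \<Rightarrow> bool" and k :: nat
  assumes "simple_graph V E"
    and "3 \<le> k" and "k + 3 \<le> card V"
    and "has_path_subgraph V E 7"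
  shows "\<not> planar (token_vertices V k) (token_adj E)"
proof -
  have fin: "finite V" using assms(1) by (simp add: simple_graph_def)
  obtain xs where xs: "length xs = 7" "distinct xs" "set xs \<subseteq> V" "\<And>i. Suc i < 7 \<Longrightarrow> E (xs ! i) (xs ! Suc i)"
    using assms(4) unfolding has_path_subgraph_def by blast
  have c7: "card (set xs) = 7" using xs(1,2) by (simp add: distinct_card)
  have cR: "card (V - set xs) = card V - 7" using xs(3) fin c7 by (simp add: card_Diff_subset finite_subset)
  have "7 \<le> card V" using c7 xs(3) fin by (metis card_mono)
  show ?thesis
  proof (cases "k + 4 \<le> card V")
    case True
    then have "k - 3 \<le> card (V - set xs)" using cR \<open>7 \<le> card V\<close> by simp
    then obtain T where T: "T \<subseteq> V - set xs" "card T = k - 3" by (meson obtain_subset_with_card_n)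
    show ?thesis
    proof (rule phi_props[where m = 3 and X = id and E = E and V = V and xs = xs, OF fin xs T(1)])
      show "card T + 3 = k" using T(2) assms(2) by simp
    qed auto
  next
    case False
    then have kn: "k + 3 = card V" using assms(3) by simp
    then have "k - 4 \<le> card (V - set xs)" using cR by simp
    then obtain T where T: "T \<subseteq> V - set xs" "card T = k - 4" by (meson obtain_subset_with_card_n)
    show ?thesis
    proof (rule phi_props[where m = 4 and X = "\<lambda>A. {0..<7} - A" and E = E and V = V and xs = xs, OF fin xs T(1)])
      show "card T + 4 = k" using T(2) kn \<open>7 \<le> card V\<close> by simp
      show "\<And>A. A \<subseteq> {0..<7} \<Longrightarrow> card A = 3 \<Longrightarrow> card ({0..<7::nat} - A) = 4"
        by (simp add: card_Diff_subset finite_subset)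
      show "inj_on (\<lambda>A. {0..<7::nat} - A) {A. A \<subseteq> {0..<7}}"
        by (rule inj_onI) auto
      show "\<And>A. A \<subseteq> {0..<7} \<Longrightarrow> {0..<7::nat} - A \<subseteq> {0..<7}" by auto
      show "\<And>A B. A \<subseteq> {0..<7} \<Longrightarrow> B \<subseteq> {0..<7::nat} \<Longrightarrow>
          ({0..<7} - A - ({0..<7} - B)) \<union> ({0..<7} - B - ({0..<7} - A)) = (A - B) \<union> (B - A)"
        by auto
    qed
  qed
qed

end
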